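(* Let $a,b\in(0,+\infty)$ satisfy $1<a-b$. Let $\varepsilon$ satisfy $$0<\varepsilon<\min\left\{1;\ \frac{a-1-b}{224\,b}\right\}.$$ Define $\varphi:\mathbb{R}\to\mathbb{R}$ by $$\varphi(t)=\begin{cases}\frac{3}{2}\pi & \text{if } t\in(-\infty,1],\\ \frac{3}{2}\pi+\varepsilon\ln\ln\big(e+(t-1)^4\big) & \text{if } t\in(1,+\infty),\end{cases}$$ and define $g$ on $[0,+\infty)$ by $g(t)=t^{a+b\sin(\varphi(t))}$. Then the following hold. (i) $g:[0,+\infty)\to[0,+\infty)$, $g(0)=0$, and $g(t)>0$ for $t>0$. (ii) $g\in C^1([0,+\infty))\cap C^2((0,+\infty))$. (iii) $\lim_{t\to0^+}\frac{g(t)}{t}=0$, $\lim_{t\to+\infty}\frac{g(t)}{t}=+\infty$, and $g'(0)=0$. (iv) For every $t>0$, $$0<\{-8b\varepsilon+a-b\}\frac{g(t)}{t}\le g'(t)\le\{8b\varepsilon+a+b\}\frac{g(t)}{t}.$$ (v) For every $t>0$, $$0<\{-8b\varepsilon+a-b\}\,t^{a-b-1}\le g'(t)\le\{8b\varepsilon+a+b\}\,[t^{a-b-1}+t^{a+b-1}].$$ (vi) For every $t>0$, $$0<\{-224b\varepsilon+a-1-b\}\frac{g'(t)}{t}\le g''(t)\le\{224b\varepsilon+a-1+b\}\frac{g'(t)}{t}.$$ (vii) $g$ is strictly convex on $[0,+\infty)$.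
   Context: Here $e$ is Euler's number and $\ln$ the natural logarithm. *)

theory Defs
  imports "HOL-Analysis.Analysis"
begin

definition phi :: "real \<Rightarrow> real \<Rightarrow> real" where
  "phi eps t = (if t \<le> 1 then 3/2 * pi
                else 3/2 * pi + eps * ln (ln (exp 1 + (t - 1) ^ 4)))"

text \<open>g(t) = t powered to (a + b sin(phi t)), meant on [0,+infinity); note 0 powr x = 0.\<close>
definition gfun :: "real \<Rightarrow> real \<Rightarrow> real \<Rightarrow> real \<Rightarrow> real" where
  "gfun a b eps t = t powr (a + b * sin (phi eps t))"

definition strict_convex_on :: "real set \<Rightarrow> (real \<Rightarrow> real) \<Rightarrow> bool" where
  "strict_convex_on S f \<longleftrightarrow> convex S \<and>
    (\<forall>x\<in>S. \<forall>y\<in>S. x \<noteq> y \<longrightarrow> (\<forall>u. 0 < u \<and> u < 1 \<longrightarrow>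
       f ((1 - u) * x + u * y) < (1 - u) * f x + u * f y))"

end

theory Submission
  imports Defs
begin

definition U :: "real \<Rightarrow> real" where "U t = exp 1 + (t-1)^4"
definition V :: "real \<Rightarrow> real" where "V t = ln (U t)"
definition Lf :: "real \<Rightarrow> real" where "Lf t = ln (V t)"
definition L1 :: "real \<Rightarrow> real" where "L1 t = 4*(t-1)^3 / (U t * V t)"
definition L2 :: "real \<Rightarrow> real" where
  "L2 t = (12*(t-1)^2 * (U t * V t) - 16*(t-1)^6 * (V t + 1)) / (U t * V t)^2"

lemma exp1_ge2: "2 \<le> exp (1::real)"
  using exp_ge_add_one_self[of 1] by simp

lemma U_ge: "exp 1 \<le> U t" unfolding U_def by simp
lemma U_pos: "0 < U t" using U_ge[of t] exp_gt_zero[of 1] by linarith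
lemma V_ge1: "1 \<le> V t"
  unfolding V_def using U_ge[of t] by (metis ln_exp ln_le_cancel_iff exp_gt_zero U_pos)
lemma V_pos: "0 < V t" using V_ge1[of t] by linarith
lemma U_ne: "U t \<noteq> 0" using U_pos[of t] by linarith
lemma V_ne: "V t \<noteq> 0" using V_pos[of t] by linarith

lemma DERIV_U: "DERIV U t :> 4*(t-1)^3"
  unfolding U_def[abs_def] by (auto intro!: derivative_eq_intros)

lemma DERIV_V: "DERIV V t :> 4*(t-1)^3 / U t"
  unfolding V_def[abs_def]
  using U_pos[of t] by (auto intro!: derivative_eq_intros DERIV_U simp: field_simps)

lemma DERIV_Lf: "DERIV Lf t :> L1 t"
  unfolding Lf_def[abs_def] L1_def
  using U_pos[of t] V_pos[of t] by (auto intro!: derivative_eq_intros DERIV_V simp: field_simps)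

lemma DERIV_L1: "DERIV L1 t :> L2 t"
proof -
  have "DERIV (\<lambda>t. U t * V t) t :> 4*(t-1)^3 * V t + (4*(t-1)^3 / U t) * U t"
    by (rule DERIV_mult[OF DERIV_U DERIV_V])
  then have D: "DERIV (\<lambda>t. U t * V t) t :> 4*(t-1)^3 * (V t + 1)"
    using U_pos[of t] by (simp add: field_simps)
  have N: "DERIV (\<lambda>t. 4*(t-1)^3) t :> 12*(t-1)^2"
    by (auto intro!: derivative_eq_intros)
  have "DERIV (\<lambda>t. 4*(t-1)^3 / (U t * V t)) t :> (12*(t-1)^2 * (U t * V t) - 4*(t-1)^3 * (V t + 1) * (4*(t-1)^3)) / (U t * V t)^2"
    using DERIV_quotient[OF N D] U_pos[of t] V_pos[of t] by (simp add: algebra_simps power2_eq_square)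
  then show ?thesis unfolding L2_def L1_def[abs_def] by (simp add: algebra_simps eval_nat_numeral)
qed

lemma cont_U: "continuous_on S U" unfolding U_def[abs_def] by (intro continuous_intros)
lemma cont_V: "continuous_on S V" unfolding V_def[abs_def] 
  by (intro continuous_intros cont_U) (auto simp: U_ne)
lemma cont_L2: "continuous_on S L2" unfolding L2_def[abs_def] 
  by (intro continuous_intros cont_U cont_V) (auto simp: U_ne V_ne)

lemma Lf1: "Lf 1 = 0" by (simp add: Lf_def V_def U_def)
lemma L11: "L1 1 = 0" by (simp add: L1_def)
lemma L21: "L2 1 = 0" by (simp add: L2_def)

lemma deriv_piece:
  fixes F F' :: "real \<Rightarrow> real"
  assumes D: "\<And>t. DERIV F t :> F' t" and F1: "F 1 = 0" and F'1: "F' 1 = 0"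
  shows "DERIV (\<lambda>t. if t \<le> 1 then 0 else F t) x :> (if x \<le> 1 then 0 else F' x)"
proof -
  consider "x < 1" | "x > 1" | "x = 1" by linarith
  then show ?thesis
  proof cases
    case 1
    have "DERIV (\<lambda>t. 0::real) x :> 0" by simp
    then have "DERIV (\<lambda>t. if t \<le> 1 then 0 else F t) x :> 0"
      by (rule has_field_derivative_transform_within_open[of _ _ _ "{..<1}"]) (use 1 in auto)
    then show ?thesis using 1 by simp
  next
    case 2
    have "DERIV (\<lambda>t. if t \<le> 1 then 0 else F t) x :> F' x"
      by (rule has_field_derivative_transform_within_open[OF D, where S="{1<..}"]) (use 2 in auto)
    then show ?thesis using 2 by simp
  next
    case 3
    have R: "((\<lambda>h. (F (1 + h) - F 1) / h) \<longlongrightarrow> 0) (at 0)"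
      using D[of 1] F'1 by (simp add: DERIV_def)
    have "((\<lambda>h. ((if 1 + h \<le> 1 then 0 else F (1 + h)) - (if (1::real) \<le> 1 then 0 else F 1)) / h) \<longlongrightarrow> 0) (at 0)"
    proof (rule filterlim_split_at)
      have ev: "eventually (\<lambda>h::real. h < 0) (at_left 0)" by (simp add: eventually_at_filter)
      show "((\<lambda>h. ((if 1 + h \<le> 1 then 0 else F (1 + h)) - (if (1::real) \<le> 1 then 0 else F 1)) / h) \<longlongrightarrow> 0) (at_left 0)"
        by (subst tendsto_cong[of _ "\<lambda>_. 0"]) (use ev in \<open>auto elim!: eventually_mono\<close>)
    next
      have ev: "eventually (\<lambda>h::real. h > 0) (at_right 0)" by (simp add: eventually_at_filter)
      have R': "((\<lambda>h. (F (1 + h) - F 1) / h) \<longlongrightarrow> 0) (at_right 0)"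
        using R filterlim_at_split by blast
      show "((\<lambda>h. ((if 1 + h \<le> 1 then 0 else F (1 + h)) - (if (1::real) \<le> 1 then 0 else F 1)) / h) \<longlongrightarrow> 0) (at_right 0)"
        by (subst tendsto_cong[of _ "\<lambda>h. (F (1 + h) - F 1) / h"]) (use ev R' F1 in \<open>auto elim!: eventually_mono\<close>)
    qed
    then show ?thesis using 3 by (simp add: DERIV_def)
  qed
qed

lemma cont_piece:
  fixes F :: "real \<Rightarrow> real"
  assumes C: "continuous_on UNIV F" and F1: "F 1 = 0"
  shows "isCont (\<lambda>t. if t \<le> 1 then 0 else F t) x"
proof -
  consider "x < 1" | "x > 1" | "x = 1" by linarith
  then show ?thesis
  proof cases
    case 1
    have ev: "eventually (\<lambda>y. y \<in> {..<1}) (nhds x)"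
      by (rule eventually_nhds_in_open) (use 1 in auto)
    have "isCont (\<lambda>t. 0::real) x" by simp
    then show ?thesis
      by (subst isCont_cong[OF eventually_mono[OF ev]]) auto
  next
    case 2
    have "isCont F x" using C by (simp add: continuous_on_eq_continuous_at)
    have ev: "eventually (\<lambda>y. y \<in> {1<..}) (nhds x)"
      by (rule eventually_nhds_in_open) (use 2 in auto)
    then show ?thesis using \<open>isCont F x\<close>
      by (subst isCont_cong[OF eventually_mono[OF ev]]) auto
  next
    case 3
    have "isCont F 1" using C by (simp add: continuous_on_eq_continuous_at)
    then have "(F \<longlongrightarrow> 0) (at_right 1)" using F1
      by (metis continuous_at filterlim_at_split)
    then show ?thesis unfolding 3
      by (intro isCont_If_ge) (auto simp: continuous_const)
  qed
qed

lemma poly1: "0 \<le> (s::real) \<Longrightarrow> 4* s^3*(1+s) \<le> 6*(2 + s^4)"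
proof -
  have "0 \<le> (s^2-s-1)^2 + (s-1)^2 + 4" by simp
  then show ?thesis by (simp add: algebra_simps power2_eq_square eval_nat_numeral)
qed

lemma poly2: "0 \<le> (s::real) \<Longrightarrow> s^2*(1+s)^2 \<le> 4*(2 + s^4)"
proof -
  have "0 \<le> (s^2-s)^2" "0 \<le> (s^2 - 1/2)^2" by simp_all
  then show ?thesis by (simp add: algebra_simps power2_eq_square eval_nat_numeral)
qed

lemma poly3: "0 \<le> (s::real) \<Longrightarrow> 1 + s \<le> 2 + s^4"
proof -
  have "0 \<le> (s-1)^2" "0 \<le> (s^2 - 1)^2" by simp_all
  then have "2 * s \<le> 1 + s^2" "2 * s^2 \<le> 1 + s^4"
    by (simp_all add: algebra_simps power2_eq_square eval_nat_numeral)
  moreover have "0 \<le> s^4" by simp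
  ultimately show ?thesis by (smt (verit))
qed

lemma bnds:
  assumes t1: "1 < t"
  shows "0 \<le> L1 t * t" "L1 t * t \<le> 6" "0 \<le> L1 t * t * ln t" "L1 t * t * ln t \<le> 6"
    "(L1 t)^2 * t^2 * ln t \<le> 36" "\<bar>L2 t\<bar> * t^2 * ln t \<le> 120"
proof -
  define s where "s = t - 1"
  have s0: "0 < s" and ts: "t = 1 + s" using t1 by (auto simp: s_def)
  define u where "u = U t"
  define v where "v = V t"
  define l where "l = ln t"
  have u: "2 + s^4 \<le> u" using exp1_ge2 by (simp add: u_def U_def s_def)
  have u0: "0 < u" using U_pos by (simp add: u_def)
  have v1: "1 \<le> v" using V_ge1 by (simp add: v_def)
  have tu: "t \<le> u" using poly3[of s] s0 u ts by linarith
  have l0: "0 < l" using t1 by (simp add: l_def)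
  have lv: "l \<le> v" unfolding l_def v_def V_def u_def[symmetric] using tu t1 by simp
  define P where "P = 4* s^3*t/u"
  have P0: "0 \<le> P" using s0 t1 u0 by (simp add: P_def)
  have "4 * s^3*(1+s) \<le> 6*u" using poly1[OF less_imp_le[OF s0]] u by (smt (verit))
  then have P6: "P \<le> 6" using u0 ts by (simp add: P_def divide_le_eq) 
  have L1t: "L1 t * t = P / v" by (simp add: L1_def P_def s_def u_def v_def)
  have A1: "P / v \<le> P" using P0 v1 by (simp add: divide_le_eq mult_le_cancel_left1) 
  have "P / v * l \<le> P / v * v" using lv P0 v1 by (intro mult_left_mono) auto
  then have A2: "P / v * l \<le> P" using v1 by simp
  show "0 \<le> L1 t * t" using L1t P0 v1 by simp
  show "L1 t * t \<le> 6" using L1t A1 P6 by simp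
  show "0 \<le> L1 t * t * ln t" using L1t P0 v1 l0 by (simp add: l_def[symmetric])
  show "L1 t * t * ln t \<le> 6" using L1t A2 P6 by (simp add: l_def[symmetric])
  have "(L1 t)^2 * t^2 * ln t = (L1 t * t) * (L1 t * t * ln t)" by (simp add: power2_eq_square)
  also have "\<dots> \<le> 6 * 6" using \<open>0 \<le> L1 t * t\<close> \<open>L1 t * t \<le> 6\<close> \<open>0 \<le> L1 t * t * ln t\<close> \<open>L1 t * t * ln t \<le> 6\<close>
    by (intro mult_mono) auto
  finally show "(L1 t)^2 * t^2 * ln t \<le> 36" by simp
  have L2e: "L2 t = 12 * s^2 / (u * v) - (L1 t)^2 * (v+1)"
    using u0 v1 by (simp add: L2_def L1_def s_def u_def v_def field_simps power2_eq_square eval_nat_numeral)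
  have T1: "12 * s^2 / (u * v) * t^2 * l \<le> 48"
  proof -
    have "12 * s^2 / (u * v) * t^2 * l = (12 * s^2 * t^2 / u) * (l / v)" by (simp add: field_simps)
    also have "\<dots> \<le> (12 * s^2 * t^2 / u) * 1" using lv v1 u0 l0
      by (intro mult_left_mono) (auto simp: divide_le_eq)
    also have "\<dots> \<le> 48" using poly2[of s] s0 u u0 ts by (simp add: divide_le_eq)
    finally show ?thesis .
  qed
  have T2: "(L1 t)^2 * (v+1) * t^2 * l \<le> 72"
  proof -
    have "(L1 t)^2 * (v+1) * t^2 * l = P^2 * ((v+1) * l / v^2)"
    proof -
      have "(L1 t)^2 * (v+1) * t^2 * l = (L1 t * t)^2 * ((v+1) * l)" by (simp add: power2_eq_square)
      also have "\<dots> = (P/v)^2 * ((v+1) * l)" by (simp only: L1t)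
      finally show ?thesis by (simp add: power_divide)
    qed
    also have "\<dots> \<le> 36 * 2"
    proof (intro mult_mono)
      show "P^2 \<le> 36" using P0 P6 power_mono[of P 6 2] by simp
      have "(v+1) * l \<le> (v+v) * v" using lv v1 l0 by (intro mult_mono) auto
      then show "(v+1) * l / v^2 \<le> 2" using v1 by (simp add: divide_le_eq power2_eq_square)
    qed (use l0 v1 in auto)
    finally show ?thesis by simp
  qed
  have "\<bar>L2 t\<bar> \<le> 12 * s^2 / (u * v) + (L1 t)^2 * (v+1)"
    unfolding L2e using u0 v1 by (intro abs_triangle_ineq4[THEN order_trans]) simp
  then have "\<bar>L2 t\<bar> * (t^2 * l) \<le> (12 * s^2 / (u * v) + (L1 t)^2 * (v+1)) * (t^2 * l)"
    using l0 by (intro mult_right_mono) auto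
  also have "\<dots> = 12 * s^2 / (u * v) * t^2 * l + (L1 t)^2 * (v+1) * t^2 * l" by (simp add: algebra_simps)
  finally show "\<bar>L2 t\<bar> * t^2 * ln t \<le> 120" using T1 T2 by (simp add: l_def mult.assoc)
qed


definition q :: "real \<Rightarrow> real" where "q t = (if t \<le> 1 then 0 else Lf t)"
definition q1 :: "real \<Rightarrow> real" where "q1 t = (if t \<le> 1 then 0 else L1 t)"
definition q2 :: "real \<Rightarrow> real" where "q2 t = (if t \<le> 1 then 0 else L2 t)"

lemma DERIV_q: "DERIV q t :> q1 t"
  unfolding q_def[abs_def] q1_def by (rule deriv_piece[OF DERIV_Lf Lf1 L11])
lemma DERIV_q1: "DERIV q1 t :> q2 t"
  unfolding q1_def[abs_def] q2_def by (rule deriv_piece[OF DERIV_L1 L11 L21])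
lemma isCont_q: "isCont q t" using DERIV_q DERIV_isCont by blast
lemma isCont_q1: "isCont q1 t" using DERIV_q1 DERIV_isCont by blast
lemma isCont_q2: "isCont q2 t"
  unfolding q2_def[abs_def] by (rule cont_piece[OF cont_L2 L21])

lemma phi_eq: "phi e t = 3/2*pi + e * q t"
  by (simp add: phi_def q_def Lf_def V_def U_def)

lemma Qb:
  assumes "0 < t"
  shows "\<bar>q1 t * t * ln t\<bar> \<le> 6" "\<bar>q1 t * t\<bar> \<le> 6" "(q1 t)^2 * t^2 * \<bar>ln t\<bar> \<le> 36"
    "\<bar>q2 t\<bar> * t^2 * \<bar>ln t\<bar> \<le> 120"
proof -
  have "\<bar>q1 t * t * ln t\<bar> \<le> 6 \<and> \<bar>q1 t * t\<bar> \<le> 6 \<and> (q1 t)^2 * t^2 * \<bar>ln t\<bar> \<le> 36 \<and>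
    \<bar>q2 t\<bar> * t^2 * \<bar>ln t\<bar> \<le> 120"
  proof (cases "t \<le> 1")
    case True then show ?thesis by (simp add: q1_def q2_def)
  next
    case False
    then have t1: "1 < t" by simp
    then have "0 < ln t" by simp
    then show ?thesis using bnds[OF t1] t1 by (simp add: q1_def q2_def)
  qed
  then show "\<bar>q1 t * t * ln t\<bar> \<le> 6" "\<bar>q1 t * t\<bar> \<le> 6" "(q1 t)^2 * t^2 * \<bar>ln t\<bar> \<le> 36"
    "\<bar>q2 t\<bar> * t^2 * \<bar>ln t\<bar> \<le> 120" by auto
qed

definition H :: "real \<Rightarrow> real \<Rightarrow> real \<Rightarrow> real \<Rightarrow> real" where
  "H a b e t = a + b * sin (phi e t)"
definition H1 :: "real \<Rightarrow> real \<Rightarrow> real \<Rightarrow> real \<Rightarrow> real" where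
  "H1 a b e t = b * cos (phi e t) * (e * q1 t)"
definition H2 :: "real \<Rightarrow> real \<Rightarrow> real \<Rightarrow> real \<Rightarrow> real" where
  "H2 a b e t = b * (cos (phi e t) * (e * q2 t) - sin (phi e t) * (e * q1 t)^2)"
definition G1 :: "real \<Rightarrow> real \<Rightarrow> real \<Rightarrow> real \<Rightarrow> real" where
  "G1 a b e t = gfun a b e t * (H1 a b e t * ln t + H a b e t / t)"
definition G2 :: "real \<Rightarrow> real \<Rightarrow> real \<Rightarrow> real \<Rightarrow> real" where
  "G2 a b e t = G1 a b e t * (H1 a b e t * ln t + H a b e t / t) +
     gfun a b e t * (H2 a b e t * ln t + H1 a b e t / t + (H1 a b e t * t - H a b e t) / t^2)"

lemma phi_fun: "phi e = (\<lambda>t. 3/2*pi + e * q t)" using phi_eq by blast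

lemma DERIV_phi: "DERIV (phi e) t :> e * q1 t"
  unfolding phi_fun by (auto intro!: derivative_eq_intros DERIV_q)

lemma isCont_phi: "isCont (phi e) t" using DERIV_phi DERIV_isCont by blast

lemma DERIV_H: "DERIV (H a b e) t :> H1 a b e t"
  unfolding H_def[abs_def] H1_def
  by (auto intro!: derivative_eq_intros DERIV_phi)

lemma DERIV_eq1: "DERIV (\<lambda>t. e * q1 t) t :> e * q2 t"
  by (auto intro!: derivative_eq_intros DERIV_q1)

lemma DERIV_H1: "DERIV (H1 a b e) t :> H2 a b e t"
proof -
  have "DERIV (\<lambda>t. b * cos (phi e t)) t :> b * (- sin (phi e t) * (e * q1 t))"
    by (auto intro!: derivative_eq_intros DERIV_phi)
  from DERIV_mult[OF this DERIV_eq1[of e]] show ?thesis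
    unfolding H1_def[abs_def] H2_def by (simp add: algebra_simps power2_eq_square)
qed

lemma gfun_fun: "gfun a b e = (\<lambda>t. t powr H a b e t)"
  by (auto simp: gfun_def H_def)

lemma DERIV_G: "0 < t \<Longrightarrow> DERIV (gfun a b e) t :> G1 a b e t"
  unfolding gfun_fun G1_def
  using DERIV_powr[OF DERIV_ident _ DERIV_H, of t a b e] by (simp add: gfun_def H_def)

lemma DERIV_G1: assumes t: "0 < t" shows "DERIV (G1 a b e) t :> G2 a b e t"
proof -
  have D1: "DERIV (\<lambda>t. H1 a b e t * ln t) t :> H2 a b e t * ln t + inverse t * H1 a b e t"
    using DERIV_mult[OF DERIV_H1[of a b e t] DERIV_ln[OF t]] by simp
  have D2: "DERIV (\<lambda>t. H a b e t / t) t :> (H1 a b e t * t - 1 * H a b e t) / t^2"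
    using DERIV_quotient[OF DERIV_H[of a b e t] DERIV_ident] t by (simp add: power2_eq_square)
  have D3: "DERIV (\<lambda>t. H1 a b e t * ln t + H a b e t / t) t :>
     H2 a b e t * ln t + inverse t * H1 a b e t + (H1 a b e t * t - 1 * H a b e t) / t^2"
    by (rule DERIV_add[OF D1 D2])
  have "DERIV (\<lambda>t. gfun a b e t * (H1 a b e t * ln t + H a b e t / t)) t :>
     G1 a b e t * (H1 a b e t * ln t + H a b e t / t) + 
     (H2 a b e t * ln t + inverse t * H1 a b e t + (H1 a b e t * t - 1 * H a b e t) / t^2) * gfun a b e t"
    by (rule DERIV_mult[OF DERIV_G[OF t] D3])
  moreover have "G1 a b e = (\<lambda>t. gfun a b e t * (H1 a b e t * ln t + H a b e t / t))"
    by (simp add: G1_def[abs_def])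
  moreover have "G1 a b e t * (H1 a b e t * ln t + H a b e t / t) + 
     (H2 a b e t * ln t + inverse t * H1 a b e t + (H1 a b e t * t - 1 * H a b e t) / t^2) * gfun a b e t
     = G2 a b e t"
    unfolding G2_def by (simp add: algebra_simps divide_inverse)
  ultimately show ?thesis by simp
qed

lemma isCont_G2: assumes t: "0 < t" shows "isCont (G2 a b e) t"
proof -
  have c1: "isCont (\<lambda>t. H a b e t) t" using DERIV_H DERIV_isCont by blast
  have c2: "isCont (\<lambda>t. H1 a b e t) t" using DERIV_H1 DERIV_isCont by blast
  have c3: "isCont (\<lambda>t. H2 a b e t) t"
    unfolding H2_def by (intro continuous_intros isCont_phi isCont_q1 isCont_q2)
  have c4: "isCont (\<lambda>t. gfun a b e t) t" using DERIV_G[OF t] DERIV_isCont by blast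
  have c5: "isCont (\<lambda>t. G1 a b e t) t" using DERIV_G1[OF t] DERIV_isCont by blast
  have c6: "isCont (\<lambda>t. t) t" by simp
  have c7: "isCont ln t" using DERIV_ln[OF t] DERIV_isCont by blast
  have c8: "isCont (\<lambda>t. t^2) t" by simp
  have A: "isCont (\<lambda>t. H1 a b e t * ln t + H a b e t / t) t"
    by (rule isCont_add isCont_mult isCont_divide c1 c2 c6 c7 | use t in simp)+
  have B: "isCont (\<lambda>t. H2 a b e t * ln t + H1 a b e t / t + (H1 a b e t * t - H a b e t) / t^2) t"
    by (rule isCont_add isCont_diff isCont_mult isCont_divide c1 c2 c3 c6 c7 c8 | use t in simp)+
  have "isCont (\<lambda>t. G1 a b e t * (H1 a b e t * ln t + H a b e t / t) +
     gfun a b e t * (H2 a b e t * ln t + H1 a b e t / t + (H1 a b e t * t - H a b e t) / t^2)) t"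
    by (intro isCont_add isCont_mult A B c4 c5)
  then show ?thesis unfolding G2_def[abs_def] .
qed

lemma phi_le1: "t \<le> 1 \<Longrightarrow> phi e t = 3/2*pi" by (simp add: phi_def)

lemma H_le1: assumes "t \<le> 1" shows "H a b e t = a - b"
proof -
  have "sin (phi e t) = -1" using phi_le1[OF assms] sin_3over2_pi by metis
  then show ?thesis by (simp add: H_def)
qed
lemma H1_le1: "t \<le> 1 \<Longrightarrow> H1 a b e t = 0" by (simp add: H1_def q1_def)

lemma H_lb: "0 \<le> b \<Longrightarrow> a - b \<le> H a b e t"
  unfolding H_def using mult_left_mono[OF sin_ge_minus_one[of "phi e t"], of b] by simp
lemma H_ub: "0 \<le> b \<Longrightarrow> H a b e t \<le> a + b"
  unfolding H_def using mult_left_mono[OF sin_le_one[of "phi e t"], of b] by simp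

lemma abs_cos_mult: "\<bar>(c::real) * cos x * y\<bar> \<le> \<bar>c\<bar> * \<bar>y\<bar>"
proof -
  have "\<bar>c * cos x * y\<bar> = \<bar>c\<bar> * \<bar>cos x\<bar> * \<bar>y\<bar>" by (simp only: abs_mult)
  also have "\<dots> \<le> \<bar>c\<bar> * 1 * \<bar>y\<bar>" by (intro mult_mono) auto
  finally show ?thesis by simp
qed

lemma abs3: "\<bar>x\<bar> \<le> p \<Longrightarrow> \<bar>y\<bar> \<le> pq \<Longrightarrow> \<bar>z\<bar> \<le> r \<Longrightarrow> \<bar>x + y + (z::real)\<bar> \<le> p + pq + r"
  by linarith

lemma A_bound:
  assumes t: "0 < t" and b: "0 < b" and e: "0 < e"
  shows "\<bar>H1 a b e t * t * ln t\<bar> \<le> 6 * b * e"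
proof -
  have "\<bar>H1 a b e t * t * ln t\<bar> = \<bar>b * cos (phi e t) * (e * (q1 t * t * ln t))\<bar>"
    by (simp add: H1_def algebra_simps)
  also have "\<dots> \<le> \<bar>b\<bar> * \<bar>e * (q1 t * t * ln t)\<bar>" by (rule abs_cos_mult)
  also have "\<dots> = b * (e * \<bar>q1 t * t * ln t\<bar>)" using b e by (simp add: abs_mult)
  also have "\<dots> \<le> b * (e * 6)" using Qb(1)[OF t] b e by simp
  finally show ?thesis by simp
qed

lemma X_bound:
  assumes t: "0 < t" and b: "0 < b" and e: "0 < e" and e1: "e \<le> 1"
  shows "\<bar>H1 a b e t * t * ln t + 2 * H1 a b e t * t + H2 a b e t * t^2 * ln t\<bar> \<le> 174 * b * e"
proof -
  have X1: "\<bar>H1 a b e t * t * ln t\<bar> \<le> 6 * b * e" by (rule A_bound[OF t b e])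
  have "\<bar>2 * H1 a b e t * t\<bar> = 2 * \<bar>b * cos (phi e t) * (e * (q1 t * t))\<bar>"
    by (simp add: H1_def algebra_simps abs_mult)
  also have "\<dots> \<le> 2 * (\<bar>b\<bar> * \<bar>e * (q1 t * t)\<bar>)" using abs_cos_mult by simp
  also have "\<dots> = 2 * (b * (e * \<bar>q1 t * t\<bar>))" using b e by (simp add: abs_mult)
  also have "\<dots> \<le> 2 * (b * (e * 6))" using Qb(2)[OF t] b e by simp
  finally have X2: "\<bar>2 * H1 a b e t * t\<bar> \<le> 12 * b * e" by simp
  have "\<bar>H2 a b e t * t^2 * ln t\<bar> = b * \<bar>cos (phi e t) * (e * q2 t) - sin (phi e t) * (e * q1 t)^2\<bar> * (t^2 * \<bar>ln t\<bar>)"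
    using b by (simp add: H2_def abs_mult)
  also have "\<dots> \<le> b * (e * \<bar>q2 t\<bar> + e^2 * (q1 t)^2) * (t^2 * \<bar>ln t\<bar>)"
  proof (intro mult_right_mono mult_left_mono)
    have "\<bar>cos (phi e t) * (e * q2 t)\<bar> \<le> e * \<bar>q2 t\<bar>"
      using abs_cos_mult[of 1 "phi e t" "e * q2 t"] e by (simp add: abs_mult)
    moreover have "\<bar>sin (phi e t) * (e * q1 t)^2\<bar> \<le> e^2 * (q1 t)^2"
    proof -
      have "\<bar>sin (phi e t) * (e * q1 t)^2\<bar> = \<bar>sin (phi e t)\<bar> * (e^2 * (q1 t)^2)"
        by (simp add: abs_mult power_mult_distrib)
      also have "\<dots> \<le> 1 * (e^2 * (q1 t)^2)" by (intro mult_right_mono) auto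
      finally show ?thesis by simp
    qed
    ultimately show "\<bar>cos (phi e t) * (e * q2 t) - sin (phi e t) * (e * q1 t)^2\<bar> \<le> e * \<bar>q2 t\<bar> + e^2 * (q1 t)^2"
      by linarith
  qed (use b in auto)
  also have "\<dots> = b * (e * (\<bar>q2 t\<bar> * t^2 * \<bar>ln t\<bar>) + e^2 * ((q1 t)^2 * t^2 * \<bar>ln t\<bar>))"
    by (simp add: algebra_simps)
  also have "\<dots> \<le> b * (e * 120 + e * 36)"
  proof (rule mult_left_mono[OF add_mono])
    show "e * (\<bar>q2 t\<bar> * t^2 * \<bar>ln t\<bar>) \<le> e * 120" using Qb(4)[OF t] e by simp
    have "e^2 \<le> e" using e e1 by (simp add: power2_eq_square mult_le_cancel_left1)
    have "e^2 * ((q1 t)^2 * t^2 * \<bar>ln t\<bar>) \<le> e * 36"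
      by (rule mult_mono) (use \<open>e^2 \<le> e\<close> Qb(3)[OF t] e in auto)
    then show "e^2 * ((q1 t)^2 * t^2 * \<bar>ln t\<bar>) \<le> e * 36" .
  qed (use b in auto)
  finally have X3: "\<bar>H2 a b e t * t^2 * ln t\<bar> \<le> 156 * b * e" by simp
  have "\<bar>H1 a b e t * t * ln t + 2 * H1 a b e t * t + H2 a b e t * t^2 * ln t\<bar> \<le> 6 * b * e + 12 * b * e + 156 * b * e"
    using X1 X2 X3 abs3 by blast
  then show ?thesis by (simp add: algebra_simps)
qed

lemma G1_eq: "0 < t \<Longrightarrow> G1 a b e t = (gfun a b e t / t) * (H a b e t + H1 a b e t * t * ln t)"
  by (simp add: G1_def field_simps)

lemma G2_eq:
  assumes t: "0 < t"
  shows "G2 a b e t = (G1 a b e t / t) * (H a b e t + H1 a b e t * t * ln t - 1)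
     + (gfun a b e t / t^2) * (H1 a b e t * t * ln t + 2 * H1 a b e t * t + H2 a b e t * t^2 * ln t)"
  using t unfolding G2_def G1_eq[OF t] by (simp add: field_simps power2_eq_square)

lemma powr_at_top_pos:
  assumes c: "0 < (c::real)"
  shows "filterlim (\<lambda>t. t powr c) at_top at_top"
proof -
  have "filterlim (\<lambda>t. c * ln t) at_top at_top"
    by (rule filterlim_tendsto_pos_mult_at_top[OF tendsto_const c ln_at_top])
  then have "filterlim (\<lambda>t. exp (c * ln t)) at_top at_top"
    by (rule filterlim_compose[OF exp_at_top])
  moreover have "eventually (\<lambda>t. exp (c * ln t) \<le> t powr c) at_top"
    using eventually_gt_at_top[of 0] by eventually_elim (simp add: powr_def)
  ultimately show ?thesis by (rule filterlim_at_top_mono)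
qed

lemma strict_convex_from_deriv:
  fixes g g1 :: "real \<Rightarrow> real"
  assumes D: "\<And>t. 0 \<le> t \<Longrightarrow> (g has_real_derivative g1 t) (at t within {0..})"
    and M: "\<And>x y. 0 \<le> x \<Longrightarrow> x < y \<Longrightarrow> g1 x < g1 y"
  shows "strict_convex_on {0..} g"
proof -
  have cont: "continuous_on {0..} g"
    unfolding continuous_on_eq_continuous_within using D DERIV_continuous by blast
  have Dat: "DERIV g t :> g1 t" if "0 < t" for t
  proof -
    have "(g has_real_derivative g1 t) (at t within {0<..})"
      by (rule has_field_derivative_subset[OF D]) (use that in auto)
    then show ?thesis using at_within_open[of t "{0<..}"] that by simp
  qed
  have mvt: "\<exists>w. x < w \<and> w < y \<and> g y - g x = (y - x) * g1 w" if "0 \<le> x" "x < y" for x y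
  proof -
    have "continuous_on {x..y} g" by (rule continuous_on_subset[OF cont]) (use that in auto)
    moreover have "g differentiable (at w)" if "x < w" "w < y" for w
      using Dat[of w] that \<open>0 \<le> x\<close> real_differentiable_def by force
    ultimately obtain l w where w: "x < w" "w < y" "DERIV g w :> l" "g y - g x = (y - x) * l"
      using MVT[OF \<open>x < y\<close>] by blast
    have "l = g1 w" using DERIV_unique[OF w(3) Dat[of w]] w that by simp
    then show ?thesis using w by blast
  qed
  have key: "g ((1 - u) * x + u * y) < (1 - u) * g x + u * g y"
    if x: "0 \<le> x" "x < y" and u: "0 < u" "u < 1" for x y u
  proof -
    define z where "z = (1 - u) * x + u * y"
    have p1: "0 < u * (y - x)" "0 < (1 - u) * (y - x)" using x u by simp_all
    have "z = x + u * (y - x)" "z = y - (1 - u) * (y - x)" unfolding z_def by (simp_all add: algebra_simps)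
    then have xz: "x < z" and zy: "z < y" using p1 by linarith+
    obtain w1 where w1: "x < w1" "w1 < z" "g z - g x = (z - x) * g1 w1" using mvt[OF x(1) xz] by blast
    obtain w2 where w2: "z < w2" "w2 < y" "g y - g z = (y - z) * g1 w2" using mvt[of z y] xz x zy by auto
    have lt: "g1 w1 < g1 w2" using M[of w1 w2] w1 w2 x by auto
    have e1: "z - x = u * (y - x)" and e2: "y - z = (1 - u) * (y - x)" unfolding z_def by (simp_all add: algebra_simps)
    have "(1 - u) * g x + u * g y - g z = (1 - u) * (g x - g z) + u * (g y - g z)" by (simp add: algebra_simps)
    also have "\<dots> = (1 - u) * (- (u * (y - x) * g1 w1)) + u * ((1 - u) * (y - x) * g1 w2)"
    proof -
      have "g x - g z = - (u * (y - x) * g1 w1)" using w1(3) e1 by simp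
      moreover have "g y - g z = (1 - u) * (y - x) * g1 w2" using w2(3) e2 by simp
      ultimately show ?thesis by simp
    qed
    also have "\<dots> = u * (1 - u) * (y - x) * (g1 w2 - g1 w1)" by (simp add: algebra_simps)
    also have "\<dots> > 0" using u x lt by (intro mult_pos_pos) auto
    finally show ?thesis unfolding z_def by simp
  qed
  show ?thesis unfolding strict_convex_on_def
  proof (intro conjI ballI impI allI)
    show "convex {0::real..}" by (rule convex_real_interval)
  next
    fix x y u :: real assume xy: "x \<in> {0..}" "y \<in> {0..}" "x \<noteq> y" and u: "0 < u \<and> u < 1"
    show "g ((1 - u) * x + u * y) < (1 - u) * g x + u * g y"
    proof (cases "x < y")
      case True then show ?thesis using key[of x y u] xy u by auto
    next
      case False
      then have "y < x" using xy by auto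
      then have "g ((1 - (1 - u)) * y + (1 - u) * x) < (1 - (1 - u)) * g y + (1 - u) * g x"
        using key[of y x "1 - u"] xy u by auto
      then show ?thesis by (simp add: algebra_simps)
    qed
  qed
qed


theorem theorem2p1:
  fixes a b eps :: real
  assumes ha: "0 < a" and hb: "0 < b" and hab: "1 < a - b"
    and he0: "0 < eps" and he1: "eps < min 1 ((a - 1 - b) / (224 * b))"
  defines "g \<equiv> gfun a b eps"
  shows
    "g ` {0..} \<subseteq> {0..} \<and> g 0 = 0 \<and> (\<forall>t>0. g t > 0) \<and>
     ((\<lambda>t. g t / t) \<longlongrightarrow> 0) (at_right 0) \<and>
     filterlim (\<lambda>t. g t / t) at_top at_top \<and>
     strict_convex_on {0..} g \<and>
     (\<exists>g1 g2 :: real \<Rightarrow> real.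
        (\<forall>t\<ge>0. (g has_real_derivative g1 t) (at t within {0..})) \<and>
        continuous_on {0..} g1 \<and>
        (\<forall>t>0. (g1 has_real_derivative g2 t) (at t)) \<and>
        continuous_on {0<..} g2 \<and>
        g1 0 = 0 \<and>
        (\<forall>t>0. 0 < (- 8 * b * eps + a - b) * (g t / t) \<and>
               (- 8 * b * eps + a - b) * (g t / t) \<le> g1 t \<and>
               g1 t \<le> (8 * b * eps + a + b) * (g t / t)) \<and>
        (\<forall>t>0. 0 < (- 8 * b * eps + a - b) * t powr (a - b - 1) \<and>
               (- 8 * b * eps + a - b) * t powr (a - b - 1) \<le> g1 t \<and>
               g1 t \<le> (8 * b * eps + a + b) * (t powr (a - b - 1) + t powr (a + b - 1))) \<and>
        (\<forall>t>0. 0 < (- 224 * b * eps + a - 1 - b) * (g1 t / t) \<and>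
               (- 224 * b * eps + a - 1 - b) * (g1 t / t) \<le> g2 t \<and>
               g2 t \<le> (224 * b * eps + a - 1 + b) * (g1 t / t)))"
proof -
  have e1: "eps < 1" using he1 by simp
  have "eps < (a - 1 - b) / (224 * b)" using he1 by simp
  then have e2: "224 * b * eps < a - 1 - b" using hb by (simp add: pos_less_divide_eq mult.commute)
  have be0: "0 < b * eps" using hb he0 by simp
  have c4: "0 < - 8 * b * eps + a - b" using e2 be0 by linarith
  have c5: "0 \<le> 8 * b * eps + a + b" using be0 ha hb by linarith
  have c6: "0 < - 224 * b * eps + a - 1 - b" using e2 by linarith
  define g1 where "g1 = (\<lambda>t. if t \<le> 0 then 0 else G1 a b eps t)"
  define g2 where "g2 = G2 a b eps"
  have gpos: "0 < g t" if "0 < t" for t using that by (simp add: g_def gfun_def)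
  have gnn: "0 \<le> g t" for t by (simp add: g_def gfun_def)
  have g0: "g 0 = 0" by (simp add: g_def gfun_def)
  have Kgen: "g t / t = t powr (H a b eps t - 1)" if "0 < t" for t
    using that by (simp add: g_def gfun_fun powr_diff)
  have Kle1: "g t / t = t powr (a - b - 1)" if "0 < t" "t \<le> 1" for t
    using Kgen[OF that(1)] H_le1[OF that(2)] by simp
  have Kpos: "0 < g t / t" if "0 < t" for t using gpos[OF that] that by simp
  have Klb: "t powr (a - b - 1) \<le> g t / t" if "0 < t" for t
  proof (cases "t \<le> 1")
    case True then show ?thesis using Kle1 that by simp
  next
    case False
    then show ?thesis unfolding Kgen[OF that] using H_lb[of b a eps t] hb
      by (intro powr_mono) auto
  qed
  have Kub: "g t / t \<le> t powr (a - b - 1) + t powr (a + b - 1)" if "0 < t" for t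
  proof (cases "t \<le> 1")
    case True then show ?thesis using Kle1 that by simp
  next
    case False
    then have "g t / t \<le> t powr (a + b - 1)" unfolding Kgen[OF that] using H_ub[of b a eps t] hb
      by (intro powr_mono) auto
    then show ?thesis by (smt (verit) powr_ge_zero)
  qed
  define A where "A = (\<lambda>t. H a b eps t + H1 a b eps t * t * ln t)"
  have A_lb: "a - b - 8 * b * eps \<le> A t" if "0 < t" for t
    using A_bound[OF that hb he0, of a] H_lb[of b a eps t] hb be0 unfolding A_def by linarith
  have A_ub: "A t \<le> a + b + 8 * b * eps" if "0 < t" for t
    using A_bound[OF that hb he0, of a] H_ub[of b a eps t] hb be0 unfolding A_def by linarith
  have g1eq: "g1 t = (g t / t) * A t" if "0 < t" for t
    using that by (simp add: g1_def A_def g_def G1_eq)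
  have iv: "0 < (- 8 * b * eps + a - b) * (g t / t) \<and>
               (- 8 * b * eps + a - b) * (g t / t) \<le> g1 t \<and>
               g1 t \<le> (8 * b * eps + a + b) * (g t / t)" if t: "0 < t" for t
  proof (intro conjI)
    show "0 < (- 8 * b * eps + a - b) * (g t / t)" by (rule mult_pos_pos[OF c4 Kpos[OF t]])
    have "(- 8 * b * eps + a - b) * (g t / t) \<le> A t * (g t / t)"
      using A_lb[OF t] Kpos[OF t] by (intro mult_right_mono) auto
    then show "(- 8 * b * eps + a - b) * (g t / t) \<le> g1 t" unfolding g1eq[OF t] by (simp add: mult.commute)
    have "A t * (g t / t) \<le> (8 * b * eps + a + b) * (g t / t)"
      using A_ub[OF t] Kpos[OF t] by (intro mult_right_mono) auto
    then show "g1 t \<le> (8 * b * eps + a + b) * (g t / t)" unfolding g1eq[OF t] by (simp add: mult.commute)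
  qed
  have g1pos: "0 < g1 t" if "0 < t" for t using iv[OF that] by linarith
  have v: "0 < (- 8 * b * eps + a - b) * t powr (a - b - 1) \<and>
               (- 8 * b * eps + a - b) * t powr (a - b - 1) \<le> g1 t \<and>
               g1 t \<le> (8 * b * eps + a + b) * (t powr (a - b - 1) + t powr (a + b - 1))" if t: "0 < t" for t
  proof (intro conjI)
    show "0 < (- 8 * b * eps + a - b) * t powr (a - b - 1)" using c4 t by simp
    have "(- 8 * b * eps + a - b) * t powr (a - b - 1) \<le> (- 8 * b * eps + a - b) * (g t / t)"
      using Klb[OF t] c4 by (intro mult_left_mono) auto
    then show "(- 8 * b * eps + a - b) * t powr (a - b - 1) \<le> g1 t" using iv[OF t] by linarith
    have "(8 * b * eps + a + b) * (g t / t) \<le> (8 * b * eps + a + b) * (t powr (a - b - 1) + t powr (a + b - 1))"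
      using Kub[OF t] c5 by (rule mult_left_mono)
    then show "g1 t \<le> (8 * b * eps + a + b) * (t powr (a - b - 1) + t powr (a + b - 1))" using iv[OF t] by linarith
  qed
  have vi: "0 < (- 224 * b * eps + a - 1 - b) * (g1 t / t) \<and>
               (- 224 * b * eps + a - 1 - b) * (g1 t / t) \<le> g2 t \<and>
               g2 t \<le> (224 * b * eps + a - 1 + b) * (g1 t / t)" if t: "0 < t" for t
  proof -
    define P where "P = g1 t / t"
    define Q where "Q = g t / t^2"
    define X where "X = H1 a b eps t * t * ln t + 2 * H1 a b eps t * t + H2 a b eps t * t^2 * ln t"
    have P0: "0 < P" using g1pos[OF t] t by (simp add: P_def)
    have Q0: "0 < Q" using gpos[OF t] t by (simp add: Q_def)
    have PQ: "P = Q * A t" using g1eq[OF t] t by (simp add: P_def Q_def power2_eq_square)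
    have A1: "1 \<le> A t" using A_lb[OF t] e2 be0 by linarith
    have QP: "Q \<le> P" unfolding PQ using Q0 A1 by (simp add: mult_le_cancel_left1)
    have Xb: "\<bar>X\<bar> \<le> 174 * b * eps" unfolding X_def using X_bound[OF t hb he0] e1 by simp
    have g2e: "g2 t = P * (A t - 1) + Q * X"
      unfolding g2_def P_def Q_def X_def A_def using G2_eq[OF t, of a b eps] g1_def t by (simp add: g_def)
    have QX: "\<bar>Q * X\<bar> \<le> P * (174 * b * eps)"
    proof -
      have "\<bar>Q * X\<bar> = Q * \<bar>X\<bar>" using Q0 by (simp add: abs_mult)
      also have "\<dots> \<le> P * (174 * b * eps)" using Xb QP Q0 by (intro mult_mono) auto
      finally show ?thesis .
    qed
    have L: "P * (- 224 * b * eps + a - 1 - b) \<le> P * (A t - 1 - 174 * b * eps)"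
      using A_lb[OF t] be0 P0 by (intro mult_left_mono) auto
    have R: "P * (A t - 1 + 174 * b * eps) \<le> P * (224 * b * eps + a - 1 + b)"
      using A_ub[OF t] be0 P0 by (intro mult_left_mono) auto
    have EQ1: "P * (A t - 1 - 174 * b * eps) = P * (A t - 1) - P * (174 * b * eps)"
      and EQ2: "P * (A t - 1 + 174 * b * eps) = P * (A t - 1) + P * (174 * b * eps)" by (simp_all add: algebra_simps)
    have QXa: "- (P * (174 * b * eps)) \<le> Q * X" and QXb: "Q * X \<le> P * (174 * b * eps)"
      using QX by (auto simp: abs_le_iff)
    have s2: "P * (- 224 * b * eps + a - 1 - b) \<le> g2 t"
      using L EQ1 QXa g2e by (smt (verit))
    have s3: "g2 t \<le> P * (224 * b * eps + a - 1 + b)"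
      using R EQ2 QXb g2e by (smt (verit))
    have s1: "0 < (- 224 * b * eps + a - 1 - b) * P" by (rule mult_pos_pos[OF c6 P0])
    show ?thesis using s1 s2 s3 unfolding P_def by (simp add: mult.commute)
  qed
  have Dpos: "DERIV g t :> g1 t" if "0 < t" for t
    using DERIV_G[OF that, of a b eps] that by (simp add: g_def g1_def)
  have lim0: "((\<lambda>t. g t / t) \<longlongrightarrow> 0) (at_right 0)"
  proof -
    have ev1: "eventually (\<lambda>t. 0 \<le> t) (at_right (0::real))"
      by (rule eventually_mono[OF eventually_at_right_less[of "0::real"]]) simp
    have T: "((\<lambda>t. t powr (a - b - 1)) \<longlongrightarrow> 0) (at_right 0)"
      by (rule tendsto_zero_powrI[OF tendsto_ident_at tendsto_const ev1]) (use hab in simp)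
    have "\<exists>c>0. \<forall>y>0. y < c \<longrightarrow> y powr (a - b - 1) = g y / y"
      using Kle1 by (intro exI[of _ 1]) auto
    then have ev2: "eventually (\<lambda>t. t powr (a - b - 1) = g t / t) (at_right 0)"
      by (simp only: eventually_at_right[OF zero_less_one])
    show ?thesis using tendsto_cong[OF ev2] T by simp
  qed
  have D0: "(g has_real_derivative g1 0) (at 0 within {0..})"
  proof -
    have "((\<lambda>y. (g y - g 0) / (y - 0)) \<longlongrightarrow> 0) (at 0 within {0..})"
      using lim0 g0 by (simp add: at_within_Ici_at_right)
    then show ?thesis by (simp add: has_field_derivative_iff g1_def)
  qed
  have Dall: "\<forall>t\<ge>0. (g has_real_derivative g1 t) (at t within {0..})"
  proof (intro allI impI)
    fix t :: real assume "0 \<le> t"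
    then show "(g has_real_derivative g1 t) (at t within {0..})"
      using D0 Dpos[of t] has_field_derivative_at_within by (cases "t = 0") auto
  qed
  have Dg1: "\<forall>t>0. (g1 has_real_derivative g2 t) (at t)"
  proof (intro allI impI)
    fix t :: real assume t: "0 < t"
    show "(g1 has_real_derivative g2 t) (at t)" unfolding g2_def
      by (rule has_field_derivative_transform_within_open[OF DERIV_G1[OF t, of a b eps], where S="{0<..}"])
         (use t in \<open>auto simp: g1_def g2_def\<close>)
  qed
  have cont_g1: "continuous_on {0..} g1"
    unfolding continuous_on_eq_continuous_within
  proof
    fix x :: real assume x: "x \<in> {0..}"
    show "continuous (at x within {0..}) g1"
    proof (cases "x = 0")
      case False
      then have "0 < x" using x by simp
      then have "isCont g1 x" using Dg1 DERIV_isCont by blast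
      then show ?thesis by (rule continuous_at_imp_continuous_at_within)
    next
      case True
      have "((\<lambda>t. (a - b) * (g t / t)) \<longlongrightarrow> (a - b) * 0) (at_right 0)"
        by (rule tendsto_mult[OF tendsto_const lim0])
      moreover have "eventually (\<lambda>t. (a - b) * (g t / t) = g1 t) (at_right 0)"
      proof -
        have "\<exists>c>0. \<forall>y>0. y < c \<longrightarrow> (a - b) * (g y / y) = g1 y"
        proof (intro exI[of _ 1] conjI allI impI)
          fix y :: real assume y: "0 < y" "y < 1"
          have "A y = a - b" using H_le1[of y a b eps] H1_le1[of y a b eps] y by (simp add: A_def)
          then show "(a - b) * (g y / y) = g1 y" using g1eq[OF y(1)] by simp
        qed simp
        then show ?thesis by (simp only: eventually_at_right[OF zero_less_one])
      qed
      ultimately have "(g1 \<longlongrightarrow> 0) (at_right 0)" using tendsto_cong by fastforce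
      then show ?thesis using True
        by (simp add: continuous_within at_within_Ici_at_right g1_def)
    qed
  qed
  have cont_g2: "continuous_on {0<..} g2"
    by (rule continuous_at_imp_continuous_on) (auto simp: g2_def isCont_G2)
  have mono_g1: "g1 x < g1 y" if xnn: "0 \<le> x" and xy: "x < y" for x y
  proof (cases "x = 0")
    case True then show ?thesis using g1pos[of y] xy by (simp add: g1_def)
  next
    case False
    then have x0: "0 < x" using xnn by simp
    have "\<And>w. x \<le> w \<Longrightarrow> w \<le> y \<Longrightarrow> DERIV g1 w :> g2 w" using Dg1 x0 by auto
    then obtain z where z: "x < z" "z < y" "g1 y - g1 x = (y - x) * g2 z"
      using MVT2[OF xy, of g1 g2] by blast
    have z0: "0 < z" using z x0 by simp
    have "0 < g1 z / z" using g1pos[OF z0] z0 by simp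
    then have "0 < g2 z" using vi[OF z0] c6 mult_pos_pos[OF c6] by linarith
    then have "0 < (y - x) * g2 z" using xy by simp
    then show ?thesis using z by simp
  qed
  have convex: "strict_convex_on {0..} g"
    by (rule strict_convex_from_deriv[of g g1]) (use Dall mono_g1 in auto)
  have top: "filterlim (\<lambda>t. g t / t) at_top at_top"
    by (rule filterlim_at_top_mono[OF powr_at_top_pos[of "a - b - 1"]])
       (use hab in simp, rule eventually_mono[OF eventually_gt_at_top[of "0::real"] Klb])
  have ex: "\<exists>g1 g2 :: real \<Rightarrow> real.
        (\<forall>t\<ge>0. (g has_real_derivative g1 t) (at t within {0..})) \<and>
        continuous_on {0..} g1 \<and>
        (\<forall>t>0. (g1 has_real_derivative g2 t) (at t)) \<and>
        continuous_on {0<..} g2 \<and>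
        g1 0 = 0 \<and>
        (\<forall>t>0. 0 < (- 8 * b * eps + a - b) * (g t / t) \<and>
               (- 8 * b * eps + a - b) * (g t / t) \<le> g1 t \<and>
               g1 t \<le> (8 * b * eps + a + b) * (g t / t)) \<and>
        (\<forall>t>0. 0 < (- 8 * b * eps + a - b) * t powr (a - b - 1) \<and>
               (- 8 * b * eps + a - b) * t powr (a - b - 1) \<le> g1 t \<and>
               g1 t \<le> (8 * b * eps + a + b) * (t powr (a - b - 1) + t powr (a + b - 1))) \<and>
        (\<forall>t>0. 0 < (- 224 * b * eps + a - 1 - b) * (g1 t / t) \<and>
               (- 224 * b * eps + a - 1 - b) * (g1 t / t) \<le> g2 t \<and>
               g2 t \<le> (224 * b * eps + a - 1 + b) * (g1 t / t))"
    apply (rule exI[of _ g1], rule exI[of _ g2])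
    using Dall cont_g1 Dg1 cont_g2 iv v vi by (simp add: g1_def)
  show ?thesis
    using gnn g0 gpos lim0 top convex ex by auto
qed


end
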